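(* Let $\wedge$ be any T-norm. If ${\mathcal R}_A$ is a similarity relation (with respect to $\wedge$) on the alphabet $\mathcal{F}\cup\mathcal{V}$ satisfying the conditions in the context, then the fuzzy relation ${\mathcal R}$ on terms induced by ${\mathcal R}_A$ and $\wedge$ is a similarity relation on terms.
   Context: Simple types are generated by $\tau ::= \delta \mid \tau\to\tau$ over basic types $\delta$. There are disjoint countably infinite sets $\mathcal{V}$ of typed variables and $\mathcal{F}$ of typed constants. Terms are simply typed $\lambda$-terms $t ::= x \mid c \mid \lambda x.t \mid (t_1\,t_2)$ considered modulo $\alpha\beta\eta$; $t\updownarrow_\beta^\eta$ denotes the $\eta$-long $\beta$-normal form. A T-norm $\wedge$ is an associative, commutative, non-decreasing binary operation on $[0,1]$ with unit $1$. A fuzzy relation on a set $S$ is a map $S\times S\to[0,1]$; it is a similarity relation if it is reflexive (${\mathcal R}(s,s)=1$ for all $s$), symmetric, and $\wedge$-transitive (${\mathcal R}(s_1,s_2)\ge {\mathcal R}(s_1,s)\wedge{\mathcal R}(s,s_2)$ for all $s_1,s_2,s$). The fuzzy relation ${\mathcal R}_A$ on $\mathcal{F}\cup\mathcal{V}$ satisfies: ${\mathcal R}_A(x,y)=0$ for distinct variables $x,y$; ${\mathcal R}_A(f,g)=0$ for constants $f,g$ of different types; ${\mathcal R}_A(x,f)={\mathcal R}_A(f,x)=0$ for a variable $x$ and a constant $f$. The induced relation ${\mathcal R}$ on terms is defined, for terms in $\eta$-long $\beta$-normal form, by ${\mathcal R}(a,b)={\mathcal R}_A(a,b)$ for $a,b\in\mathcal{F}\cup\mathcal{V}$;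 ${\mathcal R}((t_1\,s_1),(t_2\,s_2))={\mathcal R}(t_1,t_2)\wedge{\mathcal R}(s_1,s_2)$; ${\mathcal R}(\lambda x.t,\lambda y.s)={\mathcal R}(t\{x\mapsto z\},s\{y\mapsto z\})$ where $x,y,z$ have the same type and $z$ is fresh; ${\mathcal R}(t,s)=0$ otherwise; and for arbitrary terms ${\mathcal R}(t,s)={\mathcal R}(t\updownarrow_\beta^\eta,s\updownarrow_\beta^\eta)$. *)

theory Defs
  imports Complex_Main
begin

datatype 'b ty = Base 'b | Fun "'b ty" "'b ty"

text \<open>Alphabet F \<union> V: typed variables V n \<tau> and typed constants C n \<tau>
  (countably infinitely many of each type, disjoint).\<close>
datatype 'b atom = V nat "'b ty" | C nat "'b ty"

fun atom_ty :: "'b atom \<Rightarrow> 'b ty" where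
  "atom_ty (V _ \<tau>) = \<tau>"
| "atom_ty (C _ \<tau>) = \<tau>"

fun is_var :: "'b atom \<Rightarrow> bool" where
  "is_var (V _ _) = True"
| "is_var (C _ _) = False"

text \<open>Locally nameless terms: bound variables are de Bruijn indices (so terms
  are taken modulo alpha), free variables and constants are atoms.\<close>
datatype 'b trm = Bd nat | At "'b atom" | App "'b trm" "'b trm" | Abs "'b ty" "'b trm"

fun open_rec :: "nat \<Rightarrow> 'b atom \<Rightarrow> 'b trm \<Rightarrow> 'b trm" where
  "open_rec k z (Bd i) = (if i = k then At z else Bd i)"
| "open_rec k z (At a) = At a"
| "open_rec k z (App t s) = App (open_rec k z t) (open_rec k z s)"
| "open_rec k z (Abs T t) = Abs T (open_rec (Suc k) z t)"

definition opn :: "'b trm \<Rightarrow> 'b atom \<Rightarrow> 'b trm" where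
  "opn t z = open_rec 0 z t"

fun tsize :: "'b trm \<Rightarrow> nat" where
  "tsize (Bd i) = 1"
| "tsize (At a) = 1"
| "tsize (App t s) = Suc (tsize t + tsize s)"
| "tsize (Abs T t) = Suc (tsize t)"

lemma tsize_open_rec[simp]: "tsize (open_rec k z t) = tsize t"
  by (induction t arbitrary: k) auto

fun maxv :: "'b trm \<Rightarrow> nat" where
  "maxv (Bd i) = 0"
| "maxv (At (V n _)) = n"
| "maxv (At (C _ _)) = 0"
| "maxv (App t s) = max (maxv t) (maxv s)"
| "maxv (Abs T t) = maxv t"

definition fresh :: "'b trm \<Rightarrow> 'b trm \<Rightarrow> nat" where
  "fresh t s = Suc (max (maxv t) (maxv s))"

text \<open>nf \<Gamma> t \<tau>: t is an eta-long beta-normal term of type \<tau> in bound-variable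
  context \<Gamma>; ne \<Gamma> t \<tau>: t is a head (atom or bound variable) applied to
  eta-long beta-normal arguments.\<close>
inductive nf :: "'b ty list \<Rightarrow> 'b trm \<Rightarrow> 'b ty \<Rightarrow> bool"
  and ne :: "'b ty list \<Rightarrow> 'b trm \<Rightarrow> 'b ty \<Rightarrow> bool" where
  nf_abs: "nf (\<sigma> # \<Gamma>) t \<rho> \<Longrightarrow> nf \<Gamma> (Abs \<sigma> t) (Fun \<sigma> \<rho>)"
| nf_base: "ne \<Gamma> t (Base b) \<Longrightarrow> nf \<Gamma> t (Base b)"
| ne_atom: "atom_ty a = \<tau> \<Longrightarrow> ne \<Gamma> (At a) \<tau>"
| ne_bd: "i < length \<Gamma> \<Longrightarrow> \<Gamma> ! i = \<tau> \<Longrightarrow> ne \<Gamma> (Bd i) \<tau>"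
| ne_app: "ne \<Gamma> t (Fun \<sigma> \<tau>) \<Longrightarrow> nf \<Gamma> s \<sigma> \<Longrightarrow> ne \<Gamma> (App t s) \<tau>"

text \<open>Terms modulo alpha-beta-eta, represented by their (closed w.r.t. bound
  variables) eta-long beta-normal forms.\<close>
definition NF_terms :: "'b trm set" where
  "NF_terms = {t. \<exists>\<tau>. nf [] t \<tau>}"

definition tnorm :: "(real \<Rightarrow> real \<Rightarrow> real) \<Rightarrow> bool" where
  "tnorm T \<longleftrightarrow>
     (\<forall>x\<in>{0..1}. \<forall>y\<in>{0..1}. T x y \<in> {0..1}) \<and>
     (\<forall>x\<in>{0..1}. \<forall>y\<in>{0..1}. \<forall>z\<in>{0..1}. T (T x y) z = T x (T y z)) \<and>
     (\<forall>x\<in>{0..1}. \<forall>y\<in>{0..1}. T x y = T y x) \<and>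
     (\<forall>x\<in>{0..1}. \<forall>x'\<in>{0..1}. \<forall>y\<in>{0..1}. \<forall>y'\<in>{0..1}.
        x \<le> x' \<longrightarrow> y \<le> y' \<longrightarrow> T x y \<le> T x' y') \<and>
     (\<forall>x\<in>{0..1}. T x 1 = x)"

definition fuzzy_rel :: "'a set \<Rightarrow> ('a \<Rightarrow> 'a \<Rightarrow> real) \<Rightarrow> bool" where
  "fuzzy_rel S R \<longleftrightarrow> (\<forall>s1\<in>S. \<forall>s2\<in>S. R s1 s2 \<in> {0..1})"

definition similarity :: "(real \<Rightarrow> real \<Rightarrow> real) \<Rightarrow> 'a set \<Rightarrow> ('a \<Rightarrow> 'a \<Rightarrow> real) \<Rightarrow> bool" where
  "similarity T S R \<longleftrightarrow> fuzzy_rel S R \<and>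
     (\<forall>s\<in>S. R s s = 1) \<and>
     (\<forall>s1\<in>S. \<forall>s2\<in>S. R s1 s2 = R s2 s1) \<and>
     (\<forall>s1\<in>S. \<forall>s2\<in>S. \<forall>s\<in>S. R s1 s2 \<ge> T (R s1 s) (R s s2))"

function (sequential) Rt :: "(real \<Rightarrow> real \<Rightarrow> real) \<Rightarrow> ('b atom \<Rightarrow> 'b atom \<Rightarrow> real)
    \<Rightarrow> 'b trm \<Rightarrow> 'b trm \<Rightarrow> real" where
  "Rt T RA (At a) (At b) = RA a b"
| "Rt T RA (App t1 s1) (App t2 s2) = T (Rt T RA t1 t2) (Rt T RA s1 s2)"
| "Rt T RA (Abs \<sigma> t) (Abs \<rho> s) =
     (if \<sigma> = \<rho> then
        (let z = V (fresh t s) \<sigma> in Rt T RA (opn t z) (opn s z))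
      else 0)"
| "Rt T RA _ _ = 0"
  by pat_completeness auto
termination
  by (relation "measure (\<lambda>(T, RA, t, s). tsize t)") (auto simp: opn_def)

end

theory Submission
  imports Defs
begin

fun swn :: "nat \<Rightarrow> nat \<Rightarrow> nat \<Rightarrow> nat" where
  "swn a b n = (if n = a then b else if n = b then a else n)"

fun swa :: "nat \<Rightarrow> nat \<Rightarrow> 'b atom \<Rightarrow> 'b atom" where
  "swa a b (V n \<tau>) = V (swn a b n) \<tau>"
| "swa a b (C n \<tau>) = C n \<tau>"

fun swt :: "nat \<Rightarrow> nat \<Rightarrow> 'b trm \<Rightarrow> 'b trm" where
  "swt a b (Bd i) = Bd i"
| "swt a b (At x) = At (swa a b x)"
| "swt a b (App t s) = App (swt a b t) (swt a b s)"
| "swt a b (Abs T t) = Abs T (swt a b t)"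

fun lc :: "nat \<Rightarrow> 'b trm \<Rightarrow> bool" where
  "lc k (Bd i) = (i < k)"
| "lc k (At a) = True"
| "lc k (App t s) = (lc k t \<and> lc k s)"
| "lc k (Abs T t) = lc (Suc k) t"

lemma tsize_swt[simp]: "tsize (swt a b t) = tsize t"
  by (induction t) auto

lemma swt_open: "swt a b (open_rec k z t) = open_rec k (swa a b z) (swt a b t)"
  by (induction t arbitrary: k) auto

lemma swt_id: "a > maxv t \<Longrightarrow> b > maxv t \<Longrightarrow> swt a b t = t"
proof (induction t)
  case (At x) then show ?case by (cases x) auto
qed auto

lemma maxv_swt: "maxv (swt a b t) \<le> max (maxv t) (max a b)"
proof (induction t)
  case (At x) then show ?case by (cases x) auto
qed auto

lemma maxv_open: "maxv (open_rec k (V c \<sigma>) t) \<le> max (maxv t) c"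
proof (induction t arbitrary: k)
  case (At x) then show ?case by (cases x) auto
next
  case (App t1 t2)
  have a: "maxv (open_rec k (V c \<sigma>) t1) \<le> max (maxv t1) c" by (rule App.IH)
  have b: "maxv (open_rec k (V c \<sigma>) t2) \<le> max (maxv t2) c" by (rule App.IH)
  show ?case using a b by (simp only: open_rec.simps maxv.simps)
qed auto

lemma lc_open: "lc (Suc k) t \<Longrightarrow> lc k (open_rec k z t)"
  by (induction t arbitrary: k) auto

lemma nf_lc: "nf \<Gamma> t \<tau> \<Longrightarrow> lc (length \<Gamma>) t" and ne_lc: "ne \<Gamma> t \<tau> \<Longrightarrow> lc (length \<Gamma>) t"
  by (induction rule: nf_ne.inducts) auto

lemma T_facts:
  assumes "tnorm T"
  shows T_range: "x \<in> {0..1} \<Longrightarrow> y \<in> {0..1} \<Longrightarrow> T x y \<in> {0..1}"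
    and T_comm: "x \<in> {0..1} \<Longrightarrow> y \<in> {0..1} \<Longrightarrow> T x y = T y x"
    and T_mono: "x \<in> {0..1} \<Longrightarrow> y \<in> {0..1} \<Longrightarrow> x' \<in> {0..1} \<Longrightarrow> y' \<in> {0..1} \<Longrightarrow>
       x \<le> x' \<Longrightarrow> y \<le> y' \<Longrightarrow> T x y \<le> T x' y'"
    and T_11: "T 1 1 = 1"
    and T_0l: "x \<in> {0..1} \<Longrightarrow> T 0 x = 0"
    and T_0r: "x \<in> {0..1} \<Longrightarrow> T x 0 = 0"
    and T_rearr: "a \<in> {0..1} \<Longrightarrow> b \<in> {0..1} \<Longrightarrow> c \<in> {0..1} \<Longrightarrow> d \<in> {0..1} \<Longrightarrow>
       T (T a b) (T c d) = T (T a c) (T b d)"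
proof -
  note D = assms[unfolded tnorm_def]
  show R: "x \<in> {0..1} \<Longrightarrow> y \<in> {0..1} \<Longrightarrow> T x y \<in> {0..1}" for x y using D by blast
  show C: "x \<in> {0..1} \<Longrightarrow> y \<in> {0..1} \<Longrightarrow> T x y = T y x" for x y using D by blast
  show M: "x \<in> {0..1} \<Longrightarrow> y \<in> {0..1} \<Longrightarrow> x' \<in> {0..1} \<Longrightarrow> y' \<in> {0..1} \<Longrightarrow>
       x \<le> x' \<Longrightarrow> y \<le> y' \<Longrightarrow> T x y \<le> T x' y'" for x y x' y' using D by blast
  show "T 1 1 = 1" using D by auto
  have Z: "T x 0 = 0" if "x \<in> {0..1}" for x
  proof -
    have "T x 0 \<le> T 1 0" using M[of x 0 1 0] that by auto
    also have "T 1 0 = T 0 1" by (rule C) auto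
    also have "\<dots> = 0" using D by (meson atLeastAtMost_iff order_refl zero_le_one)
    finally show ?thesis using R[of x 0] that by auto
  qed
  show "x \<in> {0..1} \<Longrightarrow> T x 0 = 0" for x using Z by blast
  show "x \<in> {0..1} \<Longrightarrow> T 0 x = 0" for x using Z C[of 0 x] by auto
  assume a: "a \<in> {0..1}" "b \<in> {0..1}" "c \<in> {0..1}" "d \<in> {0..1}"
  have A: "x \<in> {0..1} \<Longrightarrow> y \<in> {0..1} \<Longrightarrow> z \<in> {0..1} \<Longrightarrow> T (T x y) z = T x (T y z)" for x y z
    using D by blast
  have "T (T a b) (T c d) = T a (T b (T c d))" using A a R by auto
  also have "T b (T c d) = T (T b c) d" using A a R by auto
  also have "T b c = T c b" using C a by auto
  also have "T (T c b) d = T c (T b d)" using A a R by auto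
  also have "T a (T c (T b d)) = T (T a c) (T b d)" using A a R by auto
  finally show "T (T a b) (T c d) = T (T a c) (T b d)" .
qed

locale setup_RA =
  fixes T :: "real \<Rightarrow> real \<Rightarrow> real"
    and RA :: "'b atom \<Rightarrow> 'b atom \<Rightarrow> real"
  assumes tn: "tnorm T"
    and sim: "similarity T UNIV RA"
    and vv: "\<And>x y. is_var x \<Longrightarrow> is_var y \<Longrightarrow> x \<noteq> y \<Longrightarrow> RA x y = 0"
    and vc: "\<And>x f. is_var x \<Longrightarrow> \<not> is_var f \<Longrightarrow> RA x f = 0 \<and> RA f x = 0"
begin

lemma RA_range: "RA x y \<in> {0..1}"
  using sim unfolding similarity_def fuzzy_rel_def by blast

lemma RA_refl: "RA x x = 1"
  using sim unfolding similarity_def by blast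

lemma RA_sym: "RA x y = RA y x"
  using sim unfolding similarity_def by blast

lemma RA_trans: "T (RA x z) (RA z y) \<le> RA x y"
  using sim unfolding similarity_def by blast

lemma swn_inj: "(swn a b x = swn a b y) = (x = y)"
  by auto

lemma RA_swa: "RA (swa a b x) (swa a b y) = RA x y"
proof (cases x; cases y)
  fix n \<tau> m \<rho>
  assume x: "x = V n \<tau>" and y: "y = V m \<rho>"
  show ?thesis
  proof (cases "x = y")
    case True then show ?thesis by (simp add: RA_refl)
  next
    case False
    then have "swa a b x \<noteq> swa a b y" using x y swn_inj[of a b n m] by auto
    then show ?thesis using False x y vv by simp
  qed
qed (auto simp: vc)

lemma Rt_range: "Rt T RA t s \<in> {0..1}"
proof (induction t arbitrary: s rule: measure_induct_rule[where f=tsize])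
  case (less t)
  show ?case
  proof (cases t; cases s)
    fix t1 t2 s1 s2 assume ts: "t = App t1 t2" "s = App s1 s2"
    then show ?thesis using less[of t1] less[of t2] T_range[OF tn] by simp
  next
    fix \<sigma> t0 \<rho> s0 assume ts: "t = Abs \<sigma> t0" "s = Abs \<rho> s0"
    then show ?thesis using less[of "opn t0 (V (fresh t0 s0) \<sigma>)"] by (cases "\<sigma> = \<rho>") (auto simp: Let_def opn_def)
  qed (use RA_range in auto)
qed

lemma Rt_sym: "Rt T RA t s = Rt T RA s t"
proof (induction t arbitrary: s rule: measure_induct_rule[where f=tsize])
  case (less t)
  show ?case
  proof (cases t; cases s)
    fix t1 t2 s1 s2 assume ts: "t = App t1 t2" "s = App s1 s2"
    then show ?thesis using less[of t1] less[of t2] T_comm[OF tn] Rt_range by simp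
  next
    fix \<sigma> t0 \<rho> s0 assume ts: "t = Abs \<sigma> t0" "s = Abs \<rho> s0"
    then show ?thesis using less[of "opn t0 (V (fresh t0 s0) \<sigma>)"]
      by (simp add: Let_def opn_def fresh_def max.commute)
  qed (auto simp: RA_sym)
qed

lemma Rt_refl: "lc 0 t \<Longrightarrow> Rt T RA t t = 1"
proof (induction t rule: measure_induct_rule[where f=tsize])
  case (less t)
  show ?case
  proof (cases t)
    case (App t1 t2)
    then show ?thesis using less T_11[OF tn] by simp
  next
    case (Abs \<sigma> t0)
    then show ?thesis using less.IH[of "opn t0 (V (fresh t0 t0) \<sigma>)"] less.prems lc_open[of 0 t0]
      by (simp add: Let_def opn_def)
  qed (use less.prems in \<open>auto simp: RA_refl\<close>)
qed

lemma Rt_swt: "Rt T RA (swt a b t) (swt a b s) = Rt T RA t s"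
proof (induction t arbitrary: s a b rule: measure_induct_rule[where f=tsize])
  case (less t)
  show ?case
  proof (cases t; cases s)
    fix t1 t2 s1 s2 assume ts: "t = App t1 t2" "s = App s1 s2"
    then show ?thesis using less[of t1] less[of t2] by simp
  next
    fix \<sigma> t0 \<rho> s0 assume ts: "t = Abs \<sigma> t0" "s = Abs \<rho> s0"
    show ?thesis
    proof (cases "\<sigma> = \<rho>")
      case False then show ?thesis using ts by simp
    next
      case True
      define n where "n = fresh t0 s0"
      define n' where "n' = fresh (swt a b t0) (swt a b s0)"
      define c where "c = Suc (max (max a b) (max (max n n') (max (max (maxv t0) (maxv s0))
          (max (maxv (swt a b t0)) (maxv (swt a b s0))))))"
      have IH: "Rt T RA (swt x y u) (swt x y v) = Rt T RA u v" if "tsize u = tsize t0" for u v x y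
        using less[of u] that ts by simp
      have f1: "Rt T RA (open_rec 0 (V m \<sigma>) u) (open_rec 0 (V m \<sigma>) v)
          = Rt T RA (open_rec 0 (V c \<sigma>) u) (open_rec 0 (V c \<sigma>) v)"
        if "m > maxv u" "m > maxv v" "c > maxv u" "c > maxv v" "tsize u = tsize t0" for u v m
      proof -
        have "Rt T RA (open_rec 0 (V m \<sigma>) u) (open_rec 0 (V m \<sigma>) v)
          = Rt T RA (swt m c (open_rec 0 (V m \<sigma>) u)) (swt m c (open_rec 0 (V m \<sigma>) v))"
          using IH[of "open_rec 0 (V m \<sigma>) u" m c "open_rec 0 (V m \<sigma>) v"] that by simp
        also have "\<dots> = Rt T RA (open_rec 0 (V c \<sigma>) u) (open_rec 0 (V c \<sigma>) v)"
          using that by (simp add: swt_open swt_id)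
        finally show ?thesis .
      qed
      have s': "s = Abs \<sigma> s0" using ts True by simp
      have hc: "c > maxv t0" "c > maxv s0" "c > maxv (swt a b t0)" "c > maxv (swt a b s0)" "a < c" "b < c"
        unfolding c_def by (simp_all add: less_Suc_eq_le le_max_iff_disj)
      have hn: "n > maxv t0" "n > maxv s0" "n' > maxv (swt a b t0)" "n' > maxv (swt a b s0)"
        unfolding n_def n'_def fresh_def by auto
      have L: "Rt T RA t s = Rt T RA (open_rec 0 (V c \<sigma>) t0) (open_rec 0 (V c \<sigma>) s0)"
      proof -
        have "Rt T RA t s = Rt T RA (open_rec 0 (V n \<sigma>) t0) (open_rec 0 (V n \<sigma>) s0)"
          using ts(1) s' by (simp add: Let_def opn_def n_def)
        also have "\<dots> = Rt T RA (open_rec 0 (V c \<sigma>) t0) (open_rec 0 (V c \<sigma>) s0)"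
          by (rule f1) (use hc hn in auto)
        finally show ?thesis .
      qed
      have "Rt T RA (swt a b t) (swt a b s) = Rt T RA (open_rec 0 (V n' \<sigma>) (swt a b t0)) (open_rec 0 (V n' \<sigma>) (swt a b s0))"
        using ts(1) s' by (simp add: Let_def opn_def n'_def)
      also have "\<dots> = Rt T RA (open_rec 0 (V c \<sigma>) (swt a b t0)) (open_rec 0 (V c \<sigma>) (swt a b s0))"
        by (rule f1) (use hc hn in auto)
      also have "\<dots> = Rt T RA (swt a b (open_rec 0 (V c \<sigma>) t0)) (swt a b (open_rec 0 (V c \<sigma>) s0))"
        using hc by (simp add: swt_open)
      also have "\<dots> = Rt T RA (open_rec 0 (V c \<sigma>) t0) (open_rec 0 (V c \<sigma>) s0)"
        by (rule IH) simp
      finally show ?thesis using L by simp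
    qed
  qed (auto simp: RA_swa)
qed

lemma Rt_Abs_c:
  assumes "c > maxv u" "c > maxv v"
  shows "Rt T RA (Abs \<sigma> u) (Abs \<sigma> v) = Rt T RA (open_rec 0 (V c \<sigma>) u) (open_rec 0 (V c \<sigma>) v)"
proof -
  define n where "n = fresh u v"
  have hn: "n > maxv u" "n > maxv v" unfolding n_def fresh_def by auto
  have "Rt T RA (Abs \<sigma> u) (Abs \<sigma> v) = Rt T RA (open_rec 0 (V n \<sigma>) u) (open_rec 0 (V n \<sigma>) v)"
    by (simp add: Let_def opn_def n_def)
  also have "\<dots> = Rt T RA (swt n c (open_rec 0 (V n \<sigma>) u)) (swt n c (open_rec 0 (V n \<sigma>) v))"
    by (rule Rt_swt[symmetric])
  also have "\<dots> = Rt T RA (open_rec 0 (V c \<sigma>) u) (open_rec 0 (V c \<sigma>) v)"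
    using hn assms by (simp add: swt_open swt_id)
  finally show ?thesis .
qed

lemma Rt_trans: "T (Rt T RA t1 t2) (Rt T RA t2 t3) \<le> Rt T RA t1 t3"
proof (induction t1 arbitrary: t2 t3 rule: measure_induct_rule[where f=tsize])
  case (less t1)
  have Z: "T (Rt T RA t1 t2) (Rt T RA t2 t3) \<le> Rt T RA t1 t3"
    if "Rt T RA t1 t2 = 0 \<or> Rt T RA t2 t3 = 0"
    using that Rt_range[of t1 t2] Rt_range[of t2 t3] Rt_range[of t1 t3] T_0l[OF tn] T_0r[OF tn] by auto
  show ?case
  proof (cases t1; cases t2; cases t3)
    fix a1 a2 a3 assume "t1 = At a1" "t2 = At a2" "t3 = At a3"
    then show ?thesis using RA_trans by simp
  next
    fix u1 v1 u2 v2 u3 v3 assume ts: "t1 = App u1 v1" "t2 = App u2 v2" "t3 = App u3 v3"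
    have "T (Rt T RA t1 t2) (Rt T RA t2 t3) = T (T (Rt T RA u1 u2) (Rt T RA u2 u3)) (T (Rt T RA v1 v2) (Rt T RA v2 v3))"
      using ts T_rearr[OF tn] Rt_range by simp
    also have "\<dots> \<le> T (Rt T RA u1 u3) (Rt T RA v1 v3)"
      by (rule T_mono[OF tn]) (use Rt_range T_range[OF tn] less ts in auto)
    finally show ?thesis using ts by simp
  next
    fix s1 u1 s2 u2 s3 u3 assume ts: "t1 = Abs s1 u1" "t2 = Abs s2 u2" "t3 = Abs s3 u3"
    show ?thesis
    proof (cases "s1 = s2 \<and> s2 = s3")
      case False then show ?thesis using ts by (intro Z) auto
    next
      case True
      define c where "c = Suc (max (maxv u1) (max (maxv u2) (maxv u3)))"
      have hc: "c > maxv u1" "c > maxv u2" "c > maxv u3" unfolding c_def by auto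
      have e: "Rt T RA (Abs s1 x) (Abs s1 y) = Rt T RA (open_rec 0 (V c s1) x) (open_rec 0 (V c s1) y)"
        if "x \<in> {u1,u2,u3}" "y \<in> {u1,u2,u3}" for x y
        by (rule Rt_Abs_c) (use that hc in auto)
      have "T (Rt T RA (open_rec 0 (V c s1) u1) (open_rec 0 (V c s1) u2)) (Rt T RA (open_rec 0 (V c s1) u2) (open_rec 0 (V c s1) u3))
        \<le> Rt T RA (open_rec 0 (V c s1) u1) (open_rec 0 (V c s1) u3)"
        by (rule less) (simp add: ts)
      then show ?thesis using ts True e by auto
    qed
  qed (use Z in auto)
qed

end

theorem theorem1:
  fixes T :: "real \<Rightarrow> real \<Rightarrow> real"
    and RA :: "'b atom \<Rightarrow> 'b atom \<Rightarrow> real"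
  assumes "tnorm T"
    and "similarity T UNIV RA"
    and "\<And>x y. is_var x \<Longrightarrow> is_var y \<Longrightarrow> x \<noteq> y \<Longrightarrow> RA x y = 0"
    and "\<And>f g. \<not> is_var f \<Longrightarrow> \<not> is_var g \<Longrightarrow> atom_ty f \<noteq> atom_ty g \<Longrightarrow> RA f g = 0"
    and "\<And>x f. is_var x \<Longrightarrow> \<not> is_var f \<Longrightarrow> RA x f = 0 \<and> RA f x = 0"
  shows "similarity T NF_terms (Rt T RA)"
proof -
  interpret setup_RA T RA using assms by unfold_locales auto
  have lc: "lc 0 t" if "t \<in> NF_terms" for t
    using that nf_lc[of "[]"] unfolding NF_terms_def by fastforce
  show ?thesis
    unfolding similarity_def fuzzy_rel_def
  proof (intro conjI ballI)
    fix t :: "'b trm" assume "t \<in> NF_terms" then show "Rt T RA t t = 1" using Rt_refl lc by blast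
  next
    fix t s :: "'b trm" show "Rt T RA t s \<in> {0..1}" by (rule Rt_range)
  next
    fix t s :: "'b trm" show "Rt T RA t s = Rt T RA s t" by (rule Rt_sym)
  next
    fix t1 t2 t :: "'b trm" show "T (Rt T RA t1 t) (Rt T RA t t2) \<le> Rt T RA t1 t2" by (rule Rt_trans)
  qed
qed

end
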